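(* Let $g$ be a smooth function of one variable and consider, on the loop space of smooth maps $u:S^1\to\mathbb{R}$, the Poisson bivectors of hydrodynamic type $\omega_1=\delta'(x-y)$ and $\omega_2=g(u)\delta'(x-y)+\frac12 g'(u)u_x\delta(x-y)$. If the pencil $\omega_2-\lambda\omega_1$ is exact, i.e. there exists a local evolutionary vector field $X$ with $\mathrm{Lie}_X\omega_1=0$ and $\mathrm{Lie}_X\omega_2=\omega_1$, then there are constants $a,b$ such that $g(u)=au+b$, i.e. the pencil has the form $$(au+b)\delta'(x-y)+\frac12 a u_x\delta(x-y)-\lambda\delta'(x-y).$$
   Context: Scalar case ($u$ a single function, periodic in $x$). A local evolutionary vector field is $X=\sum_{s\ge0}\partial_x^s\xi\,\frac{\partial}{\partial u_{(s)}}$ with $\xi$ a differential polynomial in $u$. The Lie derivative of a local bivector with respect to $X$ is the Schouten bracket with $X$ (for $\omega_1=\delta'$ and $X$ with characteristic $\xi$, $\mathrm{Lie}_X\omega_1$ is the operator $-\xi_*\circ\partial_x-\partial_x\circ\xi_*^\dagger$, where $\xi_*=\sum_k\frac{\partial\xi}{\partial u_{(k)}}\partial_x^k$ is the Fréchet derivative and $\dagger$ the formal adjoint, with an operator $\sum_t a_t\partial_x^t$ identified with the bivector $\sum_t a_t\delta^{(t)}(x-y)$). Exactness of a pencil $\omega_2-\lambda\omega_1$: there is a vector field $X$ with $\mathrm{Lie}_X\omega_2=\omega_1\neq0$ and $\mathrm{Lie}_X\omega_1=0$. *)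

theory Defs
  imports "HOL-Analysis.Analysis"
begin

definition smooth :: "(real \<Rightarrow> real) \<Rightarrow> bool" where
  "smooth f \<longleftrightarrow> (\<forall>n x. ((deriv ^^ n) f) differentiable (at x))"

text \<open>Smooth loops S^1 -> R, with S^1 = R/Z (period 1).\<close>
definition loop :: "(real \<Rightarrow> real) \<Rightarrow> bool" where
  "loop u \<longleftrightarrow> smooth u \<and> (\<forall>x. u (x + 1) = u x)"

text \<open>Jet coordinates: j k stands for u_(k).\<close>
definition jet :: "(real \<Rightarrow> real) \<Rightarrow> real \<Rightarrow> nat \<Rightarrow> real" where
  "jet u x = (\<lambda>k. (deriv ^^ k) u x)"

definition ev :: "((nat \<Rightarrow> real) \<Rightarrow> real) \<Rightarrow> (real \<Rightarrow> real) \<Rightarrow> real \<Rightarrow> real" where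
  "ev F u = (\<lambda>x. F (jet u x))"

definition pd :: "nat \<Rightarrow> ((nat \<Rightarrow> real) \<Rightarrow> real) \<Rightarrow> (nat \<Rightarrow> real) \<Rightarrow> real" where
  "pd k F j = deriv (\<lambda>t. F (j(k := t))) (j k)"

text \<open>A differential polynomial: finite sum of terms c(u) * u_(1)^m_0 * ... * u_(n)^m_(n-1),
  with smooth coefficients c.\<close>
type_synonym dpoly = "((real \<Rightarrow> real) \<times> nat list) list"

definition dp_eval :: "dpoly \<Rightarrow> (nat \<Rightarrow> real) \<Rightarrow> real" where
  "dp_eval P j = (\<Sum>(c, m) \<leftarrow> P. c (j 0) * (\<Prod>i < length m. j (Suc i) ^ (m ! i)))"

definition is_dpoly :: "dpoly \<Rightarrow> bool" where
  "is_dpoly P \<longleftrightarrow> (\<forall>(c, m) \<in> set P. smooth c)"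

definition dp_order :: "dpoly \<Rightarrow> nat" where
  "dp_order P = Max (insert 0 ((length \<circ> snd) ` set P))"

definition frechet :: "dpoly \<Rightarrow> (real \<Rightarrow> real) \<Rightarrow> (real \<Rightarrow> real) \<Rightarrow> real \<Rightarrow> real" where
  "frechet \<xi> u \<phi> = (\<lambda>x. \<Sum>k \<le> dp_order \<xi>. ev (pd k (dp_eval \<xi>)) u x * (deriv ^^ k) \<phi> x)"

definition frechet_adj :: "dpoly \<Rightarrow> (real \<Rightarrow> real) \<Rightarrow> (real \<Rightarrow> real) \<Rightarrow> real \<Rightarrow> real" where
  "frechet_adj \<xi> u \<phi> = (\<lambda>x. \<Sum>k \<le> dp_order \<xi>.
      (-1) ^ k * (deriv ^^ k) (\<lambda>y. ev (pd k (dp_eval \<xi>)) u y * \<phi> y) x)"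

text \<open>A local bivector sum_{t \<le> T} a_t delta^(t)(x-y), identified with the operator
  sum_{t \<le> T} a_t d_x^t; the coefficients a_t are differential functions depending on
  u_(0), ..., u_(M).  Represented by the triple (a, T, M).\<close>
type_synonym bivector = "(nat \<Rightarrow> (nat \<Rightarrow> real) \<Rightarrow> real) \<times> nat \<times> nat"

definition bv_op :: "bivector \<Rightarrow> (real \<Rightarrow> real) \<Rightarrow> (real \<Rightarrow> real) \<Rightarrow> real \<Rightarrow> real" where
  "bv_op P u \<phi> = (case P of (a, T, M) \<Rightarrow>
      (\<lambda>x. \<Sum>t \<le> T. ev (a t) u x * (deriv ^^ t) \<phi> x))"

text \<open>Lie derivative (Schouten bracket) of the bivector P along the evolutionary vector field
  with characteristic xi:  Lie_X P = X(P) - xi_* o P - P o xi_*^dagger,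
  where X(P) applies X to the coefficients: X(a_t) = sum_k (da_t/du_(k)) d_x^k xi.\<close>
definition lie :: "dpoly \<Rightarrow> bivector \<Rightarrow> (real \<Rightarrow> real) \<Rightarrow> (real \<Rightarrow> real) \<Rightarrow> real \<Rightarrow> real" where
  "lie \<xi> P u \<phi> = (case P of (a, T, M) \<Rightarrow>
      (\<lambda>x. (\<Sum>t \<le> T. (\<Sum>k \<le> M. ev (pd k (a t)) u x * (deriv ^^ k) (ev (dp_eval \<xi>) u) x)
                        * (deriv ^^ t) \<phi> x)
           - frechet \<xi> u (bv_op P u \<phi>) x
           - bv_op P u (frechet_adj \<xi> u \<phi>) x))"

definition omega1 :: bivector where
  "omega1 = ((\<lambda>t j. if t = 1 then 1 else 0), 1, 0)"

definition omega2 :: "(real \<Rightarrow> real) \<Rightarrow> bivector" where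
  "omega2 g = ((\<lambda>t j. if t = 1 then g (j 0) else if t = 0 then 1/2 * deriv g (j 0) * j 1 else 0), 1, 1)"

text \<open>Equality of (Lie derivatives of) local bivectors, tested on all loops u and test loops phi.\<close>
definition exact_pencil :: "(real \<Rightarrow> real) \<Rightarrow> bool" where
  "exact_pencil g \<longleftrightarrow> (\<exists>\<xi>. is_dpoly \<xi> \<and>
      (\<forall>u \<phi>. loop u \<longrightarrow> loop \<phi> \<longrightarrow> lie \<xi> (omega2 g) u \<phi> = bv_op omega1 u \<phi>) \<and>
      (\<forall>u \<phi>. loop u \<longrightarrow> loop \<phi> \<longrightarrow> lie \<xi> omega1 u \<phi> = (\<lambda>x. 0)))"

end

theory Submission
  imports Defs "HOL-Computational_Algebra.Polynomial"
begin


lemma sin_shift: "cos t = sin (t + pi/2)"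
  by (simp add: sin_add)

lemma deriv_sinf: "(deriv ^^ n) (\<lambda>x. C * sin (a*x+b)) = (\<lambda>x. C * a^n * sin (a*x + b + real n * (pi/2)))"
proof (induction n)
  case 0 then show ?case by simp
next
  case (Suc n)
  have "(deriv ^^ Suc n) (\<lambda>x. C * sin (a*x+b)) = deriv (\<lambda>x. C * a^n * sin (a*x + b + real n * (pi/2)))"
    using Suc by simp
  also have "\<dots> = (\<lambda>x. C * a^Suc n * sin (a*x + b + real (Suc n) * (pi/2)))"
  proof
    fix x
    have "((\<lambda>x. C * a^n * sin (a*x + b + real n * (pi/2))) has_real_derivative
        C * a^n * (cos (a*x + b + real n * (pi/2)) * a)) (at x)"
      by (auto intro!: derivative_eq_intros)
    moreover have "C * a^n * (cos (a*x + b + real n * (pi/2)) * a) = C * a^Suc n * sin (a*x + b + real (Suc n) * (pi/2))"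
    proof -
      have "a*x + b + real (Suc n) * (pi/2) = (a*x + b + real n * (pi/2)) + pi/2" by (simp add: algebra_simps)
      then have e: "sin (a*x + b + real (Suc n) * (pi/2)) = cos (a*x + b + real n*(pi/2))"
        by (simp only: sin_shift)
      show ?thesis by (simp only: e) (simp add: mult_ac)
    qed
    ultimately show "deriv (\<lambda>x. C * a^n * sin (a*x + b + real n * (pi/2))) x = C * a^Suc n * sin (a*x + b + real (Suc n) * (pi/2))"
      using DERIV_imp_deriv by metis
  qed
  finally show ?case .
qed

lemma deriv_const_pow: "(deriv ^^ k) (\<lambda>x. c) = (\<lambda>x. if k = 0 then c else 0)"
  by (induction k) (auto simp: deriv_const)

lemma deriv_sum_sin: "deriv (\<lambda>x. \<Sum>k\<le>N. A k * sin (a*x + B k)) = (\<lambda>x. \<Sum>k\<le>N. A k * a * sin (a*x + B k + pi/2))"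
proof
  fix x
  have "((\<lambda>x. \<Sum>k\<le>N. A k * sin (a*x + B k)) has_real_derivative (\<Sum>k\<le>N. A k * a * sin (a*x + B k + pi/2))) (at x)"
    by (auto intro!: derivative_eq_intros sum.cong simp: sin_shift[symmetric])
  then show "deriv (\<lambda>x. \<Sum>k\<le>N. A k * sin (a*x + B k)) x = (\<Sum>k\<le>N. A k * a * sin (a*x + B k + pi/2))"
    by (rule DERIV_imp_deriv)
qed



definition J :: "real \<Rightarrow> nat \<Rightarrow> real" where "J c = (\<lambda>k. if k = 0 then c else 0)"

lemma J_app: "J c k = (if k = 0 then c else 0)" by (simp add: J_def)
lemma J0[simp]: "J c 0 = c" by (simp add: J_def)
lemma JS[simp]: "J c (Suc k) = 0" by (simp add: J_def)

lemma sin_diff: "(\<lambda>x. (C::real) * sin (A*x+B)) differentiable (at x)"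
proof -
  have "((\<lambda>x. C * sin (A*x+B)) has_real_derivative C * (cos(A*x+B)*A)) (at x)"
    by (auto intro!: derivative_eq_intros)
  then show ?thesis using real_differentiable_def by blast
qed

lemma J_upd: "(J c)(0 := t) = J t" by (auto simp: J_def)

lemma jet_const: "jet (\<lambda>x. c) x = J c"
  by (auto simp: jet_def deriv_const_pow J_def)

lemma ev_const: "ev F (\<lambda>x. c) = (\<lambda>x. F (J c))"
  by (simp add: ev_def jet_const)

lemma deriv_sin1: "(deriv ^^ n) (\<lambda>x. C * sin (a*x)) = (\<lambda>x. C * a^n * sin (a*x + real n * (pi/2)))"
  using deriv_sinf[of n C a 0] by simp

lemma deriv_sin2: "(deriv ^^ n) (\<lambda>x. sin (a*x)) = (\<lambda>x. a^n * sin (a*x + real n * (pi/2)))"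
  using deriv_sinf[of n 1 a 0] by simp

lemma deriv_sin3: "deriv (\<lambda>x. sin (a*x)) = (\<lambda>x. a * sin (a*x + pi/2))"
  using deriv_sin2[of 1 a] by simp

lemma loop_const: "loop (\<lambda>x. c)"
  by (auto simp: loop_def smooth_def deriv_const_pow)

lemma loop_sin: "loop (\<lambda>x. sin (2*pi*real m * x))"
proof -
  have "smooth (\<lambda>x. sin (2*pi*real m * x))"
    unfolding smooth_def deriv_sin2 using sin_diff by blast
  moreover have "sin (2*pi*real m * (x+1)) = sin (2*pi*real m * x)" for x
  proof -
    have "2*pi*real m * (x+1) = 2*pi*real m * x + 2 * real m * pi" by (simp add: algebra_simps)
    then show ?thesis by (simp add: sin_add)
  qed
  ultimately show ?thesis by (simp add: loop_def)
qed

lemma dp_eval_Cons: "dp_eval (x#P) j = (case x of (c, m) \<Rightarrow> c (j 0) * (\<Prod>i < length m. j (Suc i) ^ (m ! i))) + dp_eval P j"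
  by (simp add: dp_eval_def)

lemma dp_diff: "is_dpoly P \<Longrightarrow> (\<lambda>t. dp_eval P (J t)) differentiable (at x)"
proof (induction P)
  case Nil then show ?case by (simp add: dp_eval_def)
next
  case (Cons y P)
  obtain c m where y: "y = (c, m)" by fastforce
  have sc: "smooth c" using Cons.prems y by (simp add: is_dpoly_def)
  then have "c differentiable (at x)" unfolding smooth_def by (metis funpow_0)
  moreover have "is_dpoly P" using Cons.prems by (simp add: is_dpoly_def)
  ultimately show ?case using Cons.IH unfolding dp_eval_Cons y
    by (auto intro!: differentiable_add differentiable_mult differentiable_const)
qed

lemma poly_lemma:
  fixes q :: "nat \<Rightarrow> real"
  assumes "\<And>m::nat. m \<ge> 1 \<Longrightarrow> (\<Sum>k\<le>N. q k * real m ^ (k+1)) = 0"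
  shows "q 0 = 0"
proof -
  define P where "P = (\<Sum>k\<le>N. monom (q k) k)"
  have ev: "poly P (real m) = (\<Sum>k\<le>N. q k * real m ^ k)" for m
    by (simp add: P_def poly_sum poly_monom)
  have "poly P (real (Suc m)) = 0" for m
  proof -
    have "real (Suc m) * poly P (real (Suc m)) = (\<Sum>k\<le>N. q k * real (Suc m) ^ (k+1))"
      unfolding ev sum_distrib_left by (rule sum.cong) (auto simp: algebra_simps)
    also have "\<dots> = 0" using assms[of "Suc m"] by simp
    finally show ?thesis by simp
  qed
  then have sub: "range (\<lambda>m. real (Suc m)) \<subseteq> {x. poly P x = 0}" by auto
  have "P = 0"
  proof (rule ccontr)
    assume "P \<noteq> 0"
    then have "finite {x. poly P x = 0}" by (rule poly_roots_finite)
    then have "finite (range (\<lambda>m. real (Suc m)))" using sub finite_subset by blast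
    moreover have "inj (\<lambda>m. real (Suc m))" by (auto simp: inj_def)
    ultimately show False using finite_imageD by fastforce
  qed
  then have "coeff P 0 = 0" by simp
  moreover have "coeff P 0 = q 0"
    by (simp add: P_def coeff_sum coeff_monom)
  ultimately show ?thesis by simp
qed



lemma pd_const: "pd k (\<lambda>j. C) j = 0"
  by (simp add: pd_def deriv_const)

lemma bv1: "bv_op omega1 u \<psi> = (\<lambda>x. deriv \<psi> x)"
  by (simp add: bv_op_def omega1_def ev_def)

lemma bv2: "bv_op (omega2 g) (\<lambda>x. c) \<psi> = (\<lambda>x. g c * deriv \<psi> x)"
  by (simp add: bv_op_def omega2_def ev_const)

lemma fa_const: "frechet_adj \<xi> (\<lambda>x. c) (\<lambda>x. sin (a*x)) =
   (\<lambda>x. \<Sum>k\<le>dp_order \<xi>. ((-1)^k * pd k (dp_eval \<xi>) (J c) * a^k) * sin (a*x + real k*(pi/2)))"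
  unfolding frechet_adj_def ev_const deriv_sin1 by (simp add: mult_ac)

lemma fr_const: "frechet \<xi> (\<lambda>x. c) (\<lambda>x. C * sin (a*x+b)) =
   (\<lambda>x. \<Sum>k\<le>dp_order \<xi>. pd k (dp_eval \<xi>) (J c) * (C * a^k * sin (a*x + b + real k*(pi/2))))"
  by (simp add: frechet_def ev_const deriv_sinf)

lemma deriv_fa: "deriv (frechet_adj \<xi> (\<lambda>x. c) (\<lambda>x. sin (a*x))) 0 =
   (\<Sum>k\<le>dp_order \<xi>. (-1)^k * pd k (dp_eval \<xi>) (J c) * a^k * a * cos (real k*(pi/2)))"
  unfolding fa_const deriv_sum_sin by (simp add: sin_shift[symmetric])

lemma fr_phi: "frechet \<xi> (\<lambda>x. c) (\<lambda>x. C * deriv (\<lambda>x. sin (a*x)) x) 0 =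
   (\<Sum>k\<le>dp_order \<xi>. pd k (dp_eval \<xi>) (J c) * (C * a * a^k * cos (real k*(pi/2))))"
proof -
  have e: "(\<lambda>x. C * deriv (\<lambda>x. sin (a*x)) x) = (\<lambda>x. (C*a) * sin (a*x + pi/2))"
    by (simp add: deriv_sin3 mult.assoc)
  show ?thesis unfolding e fr_const
    by (simp add: sin_add mult_ac)
qed

lemma lie1_const: "lie \<xi> omega1 (\<lambda>x. c) (\<lambda>x. sin (a*x)) 0 =
   - (\<Sum>k\<le>dp_order \<xi>. pd k (dp_eval \<xi>) (J c) * (a * a^k * cos (real k*(pi/2))))
   - (\<Sum>k\<le>dp_order \<xi>. (-1)^k * pd k (dp_eval \<xi>) (J c) * a^k * a * cos (real k*(pi/2)))"
proof -
  have "lie \<xi> omega1 (\<lambda>x. c) (\<lambda>x. sin (a*x)) 0 =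
     0 - frechet \<xi> (\<lambda>x. c) (\<lambda>x. 1 * deriv (\<lambda>x. sin (a*x)) x) 0
       - deriv (frechet_adj \<xi> (\<lambda>x. c) (\<lambda>x. sin (a*x))) 0"
    unfolding lie_def bv1 by (simp add: omega1_def ev_def pd_const)
  then show ?thesis using fr_phi[of \<xi> c 1 a] deriv_fa[of \<xi> c a] by simp
qed

lemma lie2_const: "lie \<xi> (omega2 g) (\<lambda>x. c) (\<lambda>x. sin (a*x)) 0 =
   deriv g c * dp_eval \<xi> (J c) * a
   - g c * (\<Sum>k\<le>dp_order \<xi>. pd k (dp_eval \<xi>) (J c) * (a * a^k * cos (real k*(pi/2))))
   - g c * (\<Sum>k\<le>dp_order \<xi>. (-1)^k * pd k (dp_eval \<xi>) (J c) * a^k * a * cos (real k*(pi/2)))"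
proof -
  have p01: "pd 0 (\<lambda>j. g (j 0)) (J c) = deriv g c"
    by (simp add: pd_def J_upd)
  have p00: "pd 0 (\<lambda>j. 1/2 * deriv g (j 0) * j 1) (J c) = 0"
    by (simp add: pd_def J_upd deriv_const)
  have "lie \<xi> (omega2 g) (\<lambda>x. c) (\<lambda>x. sin (a*x)) 0 =
     deriv g c * dp_eval \<xi> (J c) * deriv (\<lambda>x. sin (a*x)) 0
     - frechet \<xi> (\<lambda>x. c) (\<lambda>x. g c * deriv (\<lambda>x. sin (a*x)) x) 0
     - g c * deriv (frechet_adj \<xi> (\<lambda>x. c) (\<lambda>x. sin (a*x))) 0"
    apply (simp add: lie_def ev_const bv2 deriv_const_pow)
    apply (simp add: omega2_def p01 p00)
    done
  moreover have d0: "deriv (\<lambda>x. sin (a*x)) 0 = a" by (simp add: deriv_sin3)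
  ultimately show ?thesis unfolding d0 fr_phi deriv_fa
    by (simp add: sum_distrib_left mult_ac)
qed



theorem lemma15:
  fixes g :: "real \<Rightarrow> real"
  assumes "smooth g"
    and "exact_pencil g"
  shows "\<exists>a b. \<forall>v. g v = a * v + b"
proof -
  obtain \<xi> where dp: "is_dpoly \<xi>"
    and H2: "\<And>u \<phi>. loop u \<Longrightarrow> loop \<phi> \<Longrightarrow> lie \<xi> (omega2 g) u \<phi> = bv_op omega1 u \<phi>"
    and H1: "\<And>u \<phi>. loop u \<Longrightarrow> loop \<phi> \<Longrightarrow> lie \<xi> omega1 u \<phi> = (\<lambda>x. 0)"
    using assms(2) unfolding exact_pencil_def by blast
  define N where "N = dp_order \<xi>"
  define p where "p c k = pd k (dp_eval \<xi>) (J c)" for c k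
  define cs where "cs k = cos (real k * (pi/2))" for k :: nat
  define S1 where "S1 c a = (\<Sum>k\<le>N. p c k * (a * a^k * cs k))" for c a :: real
  define S2 where "S2 c a = (\<Sum>k\<le>N. (-1)^k * p c k * a^k * a * cs k)" for c a :: real
  have L1: "S1 c (2*pi*real m) + S2 c (2*pi*real m) = 0" for c m
  proof -
    have "lie \<xi> omega1 (\<lambda>x. c) (\<lambda>x. sin (2*pi*real m * x)) 0 = 0"
      using H1[OF loop_const loop_sin] by simp
    then show ?thesis using lie1_const[of \<xi> c "2*pi*real m"]
      unfolding S1_def S2_def N_def p_def cs_def by simp
  qed
  have p0: "p c 0 = 0" for c
  proof -
    define q where "q k = (1 + (-1)^k) * p c k * (2*pi)^(k+1) * cs k" for k :: nat
    have "q 0 = 0"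
    proof (rule poly_lemma[where N=N])
      fix m :: nat assume "m \<ge> 1"
      have "S1 c (2*pi*real m) + S2 c (2*pi*real m) = (\<Sum>k\<le>N. q k * real m ^ (k+1))"
        unfolding S1_def S2_def sum.distrib[symmetric]
        by (rule sum.cong) (simp_all add: q_def power_mult_distrib algebra_simps)
      then show "(\<Sum>k\<le>N. q k * real m ^ (k+1)) = 0" using L1[of c m] by simp
    qed
    then show ?thesis by (simp add: q_def cs_def)
  qed
  define X0 where "X0 t = dp_eval \<xi> (J t)" for t
  have dX0: "(X0 has_real_derivative 0) (at c)" for c
  proof -
    have "X0 differentiable (at c)" unfolding X0_def using dp_diff[OF dp] .
    then have "(X0 has_real_derivative deriv X0 c) (at c)"
      using DERIV_deriv_iff_real_differentiable by blast
    moreover have "deriv X0 c = p c 0"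
      by (simp add: p_def pd_def J_upd X0_def[abs_def])
    ultimately show ?thesis using p0 by simp
  qed
  define K where "K = X0 0"
  have X0K: "X0 c = K" for c using DERIV_isconst_all[of X0] dX0 K_def by blast
  have gK: "deriv g c * K = 1" for c
  proof -
    have "lie \<xi> (omega2 g) (\<lambda>x. c) (\<lambda>x. sin (2*pi * x)) 0
        = bv_op omega1 (\<lambda>x. c) (\<lambda>x. sin (2*pi * x)) 0"
      using fun_cong[OF H2[OF loop_const[of c] loop_sin[of 1]], of 0] by simp
    then have "deriv g c * K * (2*pi) - g c * S1 c (2*pi) - g c * S2 c (2*pi) = 2*pi"
      using lie2_const[of \<xi> g c "2*pi"] X0K[of c]
      by (simp add: bv1 deriv_sin3 S1_def S2_def N_def p_def cs_def X0_def)
    moreover have "S1 c (2*pi) + S2 c (2*pi) = 0" using L1[of c 1] by simp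
    then have z: "g c * S1 c (2*pi) + g c * S2 c (2*pi) = 0" by (metis distrib_left mult_zero_right)
    ultimately have "deriv g c * K * (2*pi) = 1 * (2*pi)" by (simp add: algebra_simps)
    then show ?thesis by simp
  qed
  then have K0: "K \<noteq> 0" by (metis mult_zero_right zero_neq_one)
  have dg: "(g has_real_derivative 1/K) (at c)" for c
  proof -
    have "g differentiable (at c)" using assms(1) unfolding smooth_def by (metis funpow_0)
    then have "(g has_real_derivative deriv g c) (at c)"
      using DERIV_deriv_iff_real_differentiable by blast
    moreover have "deriv g c = 1/K" using gK[of c] K0 by (simp add: field_simps)
    ultimately show ?thesis by simp
  qed
  define h where "h v = g v - (1/K) * v" for v
  have "(h has_real_derivative 0) (at c)" for c
    unfolding h_def using dg[of c] K0 by (auto intro!: derivative_eq_intros)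
  then have "h v = h 0" for v using DERIV_isconst_all[of h] by blast
  then have "g v = (1/K) * v + g 0" for v using h_def by (metis add.commute diff_eq_eq mult_zero_right diff_zero)
  then show ?thesis by blast
qed


end
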